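(* Let $B$ be an extremal finite Blaschke product of degree $n$ (i.e. $m(B)=\frac{n}{M(B)-n+1}$ (first kind) or $m(B)=n-1+\frac{n}{M(B)}$ (second kind)), and let $\nu=M(B)-n$ in the first case and $\nu=m(B)-n$ in the second. Then there exist $\lambda\in\mathbb T$ and distinct points $z_0,z_1,\dots,z_n\in\mathbb T$ such that: (a) $z_kB(z_k)=\lambda$ for $k=0,\dots,n$; (b) $|B'(z_0)|=\frac{n}{\nu+1}$; (c) $|B'(z_k)|=n+\nu$ for $k=1,\dots,n$.
   Context: A finite Blaschke product of degree $n$ is $B(z)=\alpha\prod_{k=1}^n \frac{z-a_k}{1-\overline{a_k}z}$ with $a_k\in\mathbb D=\{|z|<1\}$, $\alpha\in\mathbb T=\{|z|=1\}$; $M(B)=\sup_{|z|=1}|B'(z)|$, $m(B)=\inf_{|z|=1}|B'(z)|$. *)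

theory Defs
  imports "HOL-Analysis.Analysis"
begin

definition is_blaschke :: "(complex \<Rightarrow> complex) \<Rightarrow> nat \<Rightarrow> bool" where
  "is_blaschke B n \<longleftrightarrow>
     (\<exists>\<alpha> a. cmod \<alpha> = 1 \<and> (\<forall>k<n. a k \<in> ball 0 1) \<and>
        B = (\<lambda>z. \<alpha> * (\<Prod>k<n. (z - a k) / (1 - cnj (a k) * z))))"

definition Mmax :: "(complex \<Rightarrow> complex) \<Rightarrow> real" where
  "Mmax B = (SUP z\<in>sphere 0 1. cmod (deriv B z))"

definition mmin :: "(complex \<Rightarrow> complex) \<Rightarrow> real" where
  "mmin B = (INF z\<in>sphere 0 1. cmod (deriv B z))"

definition extremal_points :: "(complex \<Rightarrow> complex) \<Rightarrow> nat \<Rightarrow> real \<Rightarrow> bool" where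
  "extremal_points B n \<nu> \<longleftrightarrow>
     (\<exists>lam z. cmod lam = 1 \<and> inj_on z {0..n} \<and>
        (\<forall>k\<le>n. cmod (z k) = 1 \<and> z k * B (z k) = lam) \<and>
        cmod (deriv B (z 0)) = real n / (\<nu> + 1) \<and>
        (\<forall>k\<in>{1..n}. cmod (deriv B (z k)) = real n + \<nu>))"

end

theory Submission
  imports Defs "HOL-Computational_Algebra.Fundamental_Theorem_Algebra"
begin



lemma bf_deriv:
  fixes a w :: complex
  assumes "1 - cnj a * w \<noteq> 0"
  shows "((\<lambda>z. (z - a) / (1 - cnj a * z)) has_field_derivative
          (1 - complex_of_real ((cmod a)\<^sup>2)) / ((1 - cnj a * w) * (1 - cnj a * w))) (at w)"
proof -
  have e: "complex_of_real ((cmod a)\<^sup>2) = a * cnj a" by (rule complex_norm_square)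
  have d1: "((\<lambda>z. z - a) has_field_derivative 1) (at w)"
    by (rule derivative_eq_intros refl)+ simp
  have d2: "((\<lambda>z. 1 - cnj a * z) has_field_derivative - cnj a) (at w)"
    by (rule derivative_eq_intros refl)+ simp
  have N: "1 * (1 - cnj a * w) - (w - a) * (- cnj a) = 1 - complex_of_real ((cmod a)\<^sup>2)"
    unfolding e by (simp add: algebra_simps)
  show ?thesis using DERIV_divide[OF d1 d2 assms] unfolding N .
qed

lemma bf_circle:
  fixes a w :: complex
  assumes "cmod w = 1" "cmod a < 1"
  shows "w * ((1 - complex_of_real ((cmod a)\<^sup>2)) / ((1 - cnj a * w) * (w - a)))
         = complex_of_real ((1 - (cmod a)\<^sup>2) / (cmod (w - a))\<^sup>2)"
proof -
  have wa: "w \<noteq> a" using assms by auto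
  have w0: "w \<noteq> 0" using assms by auto
  have ww: "w * cnj w = 1" using assms by (metis complex_norm_square of_real_1 power_one)
  have "1 - cnj a * w = w * cnj (w - a)" using ww by (simp add: algebra_simps)
  moreover have "(w - a) * cnj (w - a) = complex_of_real ((cmod (w - a))\<^sup>2)"
    by (rule complex_norm_square[symmetric])
  ultimately have "(1 - cnj a * w) * (w - a) = w * complex_of_real ((cmod (w - a))\<^sup>2)"
    by (metis mult.assoc mult.commute)
  moreover have "cmod (w - a) \<noteq> 0" using wa by simp
  ultimately show ?thesis using w0 by (simp add: divide_simps)
qed

lemma prod_deriv:
  fixes a :: "nat \<Rightarrow> complex" and w :: complex
  assumes a: "\<forall>k<n. cmod (a k) < 1" and w: "cmod w = 1"
  shows "((\<lambda>z. \<Prod>k<n. (z - a k) / (1 - cnj (a k) * z)) has_field_derivative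
     (\<Prod>k<n. (w - a k) / (1 - cnj (a k) * w)) *
     (\<Sum>k<n. (1 - complex_of_real ((cmod (a k))\<^sup>2)) / ((1 - cnj (a k) * w) * (w - a k)))) (at w)"
  using a
proof (induction n)
  case 0
  then show ?case by simp
next
  case (Suc n)
  have an: "cmod (a n) < 1" using Suc.prems by simp
  have nz: "1 - cnj (a n) * w \<noteq> 0"
  proof
    assume "1 - cnj (a n) * w = 0"
    hence "cnj (a n) * w = 1" by simp
    hence "cmod (cnj (a n) * w) = 1" by simp
    thus False using an w by (simp add: norm_mult)
  qed
  have wa: "w - a n \<noteq> 0" using an w by auto
  have IH: "((\<lambda>z. \<Prod>k<n. (z - a k) / (1 - cnj (a k) * z)) has_field_derivative
     (\<Prod>k<n. (w - a k) / (1 - cnj (a k) * w)) *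
     (\<Sum>k<n. (1 - complex_of_real ((cmod (a k))\<^sup>2)) / ((1 - cnj (a k) * w) * (w - a k)))) (at w)"
    using Suc by simp
  have E: "(\<Prod>k<n. (w - a k) / (1 - cnj (a k) * w)) *
     (\<Sum>k<n. (1 - complex_of_real ((cmod (a k))\<^sup>2)) / ((1 - cnj (a k) * w) * (w - a k)))
      * ((w - a n) / (1 - cnj (a n) * w)) +
      ((1 - complex_of_real ((cmod (a n))\<^sup>2)) / ((1 - cnj (a n) * w) * (1 - cnj (a n) * w))) *
     (\<Prod>k<n. (w - a k) / (1 - cnj (a k) * w))
    = (\<Prod>k<Suc n. (w - a k) / (1 - cnj (a k) * w)) *
     (\<Sum>k<Suc n. (1 - complex_of_real ((cmod (a k))\<^sup>2)) / ((1 - cnj (a k) * w) * (w - a k)))"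
  proof -
    have E0: "\<And>(P::complex) Sm c d K. c\<noteq>0 \<Longrightarrow> d\<noteq>0 \<Longrightarrow>
       P*Sm*(d/c) + (K/(c*c))*P = (P*(d/c))*(Sm + K/(c*d))"
      by (simp add: field_simps)
    show ?thesis by (simp only: prod.lessThan_Suc sum.lessThan_Suc) (rule E0[OF nz wa])
  qed
  have F: "(\<lambda>z. \<Prod>k<Suc n. (z - a k) / (1 - cnj (a k) * z)) =
     (\<lambda>z. (\<Prod>k<n. (z - a k) / (1 - cnj (a k) * z)) * ((z - a n) / (1 - cnj (a n) * z)))"
    by simp
  show ?case unfolding F using DERIV_mult[OF IH bf_deriv[OF nz]] unfolding E .
qed

lemma lagrange:
  fixes F :: "complex poly" and S :: "complex set"
  assumes S: "finite S" and dF: "degree F < card S"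
  shows "poly F x = (\<Sum>y\<in>S. poly F y * (\<Prod>z\<in>S-{y}. (x - z) / (y - z)))"
proof -
  define G where "G = (\<Sum>y\<in>S. smult (poly F y) (\<Prod>z\<in>S-{y}. smult (1/(y-z)) [:-z,1:]))"
  have pG: "poly G x = (\<Sum>y\<in>S. poly F y * (\<Prod>z\<in>S-{y}. (x - z) / (y - z)))" for x
  proof -
    have l: "1/(y-z) * poly [:-z,1:] x = (x - z) / (y - z)" for y z
      by (simp add: divide_simps)
    show ?thesis unfolding G_def poly_sum poly_smult poly_prod l ..
  qed
  have dG: "degree G \<le> card S - 1"
    unfolding G_def
  proof (rule degree_sum_le[OF S])
    fix y assume y: "y \<in> S"
    have "degree (\<Prod>z\<in>S-{y}. smult (1/(y-z)) [:-z,1:]) \<le> (\<Sum>z\<in>S-{y}. degree (smult (1/(y-z)) [:-z,1:]))"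
      using degree_prod_sum_le[of "S-{y}" "\<lambda>z. smult (1/(y-z)) [:-z,1:]"] S by (simp add: o_def)
    also have "\<dots> \<le> (\<Sum>z\<in>S-{y}. 1)"
      by (intro sum_mono) (simp add: degree_smult_le)
    also have "\<dots> = card S - 1" using S y by simp
    finally show "degree (smult (poly F y) (\<Prod>z\<in>S-{y}. smult (1/(y-z)) [:-z,1:])) \<le> card S - 1"
      by (rule order_trans[OF degree_smult_le])
  qed
  have agree: "poly F x = poly G x" if x: "x \<in> S" for x
  proof -
    have "poly G x = poly F x * (\<Prod>z\<in>S-{x}. (x - z) / (x - z)) +
       (\<Sum>y\<in>S-{x}. poly F y * (\<Prod>z\<in>S-{y}. (x - z) / (y - z)))"
      unfolding pG by (rule sum.remove[OF S x])
    also have "(\<Prod>z\<in>S-{x}. (x - z) / (x - z)) = 1"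
      by (rule prod.neutral) auto
    also have "(\<Sum>y\<in>S-{x}. poly F y * (\<Prod>z\<in>S-{y}. (x - z) / (y - z))) = 0"
    proof (rule sum.neutral, rule ballI)
      fix y assume y: "y \<in> S - {x}"
      have "(\<Prod>z\<in>S-{y}. (x - z) / (y - z)) = 0"
        using S x y by (intro prod_zero) auto
      thus "poly F y * (\<Prod>z\<in>S-{y}. (x - z) / (y - z)) = 0" by simp
    qed
    finally show ?thesis by simp
  qed
  have "F - G = 0"
  proof (rule ccontr)
    assume ne: "F - G \<noteq> 0"
    have "S \<subseteq> {x. poly (F - G) x = 0}" using agree by auto
    hence "card S \<le> card {x. poly (F - G) x = 0}"
      using poly_roots_finite[OF ne] by (intro card_mono) auto
    also have "\<dots> \<le> degree (F - G)" by (rule card_poly_roots_bound[OF ne])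
    also have "\<dots> \<le> max (degree F) (degree G)" by (rule degree_diff_le_max)
    finally show False using dF dG by linarith
  qed
  hence "poly F x = poly G x" by simp
  thus ?thesis using pG[of x] by (rule trans)
qed



lemma bf_norm:
  fixes a y :: complex
  shows "(cmod (y - a))\<^sup>2 - (cmod (1 - cnj a * y))\<^sup>2 = ((cmod y)\<^sup>2 - 1) * (1 - (cmod a)\<^sup>2)"
proof -
  have e1: "complex_of_real ((cmod (y - a))\<^sup>2) = (y - a) * (cnj y - cnj a)"
    by (subst complex_norm_square) simp
  have e2: "complex_of_real ((cmod (1 - cnj a * y))\<^sup>2) = (1 - cnj a * y) * (1 - a * cnj y)"
    by (subst complex_norm_square) simp
  have e3: "complex_of_real ((cmod y)\<^sup>2) = y * cnj y" by (rule complex_norm_square)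
  have e4: "complex_of_real ((cmod a)\<^sup>2) = a * cnj a" by (rule complex_norm_square)
  have "complex_of_real ((cmod (y - a))\<^sup>2 - (cmod (1 - cnj a * y))\<^sup>2)
      = complex_of_real (((cmod y)\<^sup>2 - 1) * (1 - (cmod a)\<^sup>2))"
    unfolding of_real_diff of_real_mult of_real_1 e1 e2 e3 e4 by algebra
  thus ?thesis by (simp only: of_real_eq_iff)
qed

lemma bf_le:
  fixes a y :: complex
  assumes "cmod a < 1" "cmod y \<le> 1"
  shows "cmod (y - a) \<le> cmod (1 - cnj a * y)"
proof -
  have y2: "(cmod y)\<^sup>2 \<le> 1" by (rule power_le_one) (use assms in auto)
  have a2: "(cmod a)\<^sup>2 \<le> 1" by (rule power_le_one) (use assms in auto)
  have "((cmod y)\<^sup>2 - 1) * (1 - (cmod a)\<^sup>2) \<le> 0"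
    by (rule mult_nonpos_nonneg) (use y2 a2 in auto)
  hence "(cmod (y - a))\<^sup>2 \<le> (cmod (1 - cnj a * y))\<^sup>2" using bf_norm[of y a] by linarith
  thus ?thesis by (rule power2_le_imp_le) simp
qed

lemma bf_ge:
  fixes a y :: complex
  assumes "cmod a < 1" "cmod y \<ge> 1"
  shows "cmod (y - a) \<ge> cmod (1 - cnj a * y)"
proof -
  have y2: "(cmod y)\<^sup>2 \<ge> 1" by (rule one_le_power) (use assms in auto)
  have a2: "(cmod a)\<^sup>2 \<le> 1" by (rule power_le_one) (use assms in auto)
  have "((cmod y)\<^sup>2 - 1) * (1 - (cmod a)\<^sup>2) \<ge> 0"
    by (rule mult_nonneg_nonneg) (use y2 a2 in auto)
  hence "(cmod (y - a))\<^sup>2 \<ge> (cmod (1 - cnj a * y))\<^sup>2" using bf_norm[of y a] by linarith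
  thus ?thesis by (rule power2_le_imp_le) simp
qed

lemma bf_nz:
  fixes a y :: complex
  assumes "cmod a < 1" "cmod y \<le> 1"
  shows "1 - cnj a * y \<noteq> 0"
proof
  assume "1 - cnj a * y = 0"
  hence "cnj a * y = 1" by simp
  hence "cmod (cnj a * y) = 1" by simp
  moreover have "cmod (cnj a * y) < 1"
  proof -
    have "cmod a * cmod y \<le> cmod a" using assms by (simp add: mult_left_le)
    thus ?thesis using assms by (simp add: norm_mult)
  qed
  ultimately show False by simp
qed



lemma B_facts:
  fixes \<alpha> :: complex and a :: "nat \<Rightarrow> complex" and w :: complex
  assumes al: "cmod \<alpha> = 1" and a: "\<forall>k<n. cmod (a k) < 1" and w: "cmod w = 1"
  defines "B \<equiv> \<lambda>z. \<alpha> * (\<Prod>k<n. (z - a k) / (1 - cnj (a k) * z))"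
    and "s \<equiv> \<lambda>w. \<Sum>k<n. (1 - (cmod (a k))\<^sup>2) / (cmod (w - a k))\<^sup>2"
  shows "(B has_field_derivative B w * complex_of_real (s w) / w) (at w)"
    and "cmod (B w) = 1" and "s w \<ge> 0"
    and "cmod (deriv B w) = s w"
proof -
  have w0: "w \<noteq> 0" using w by auto
  let ?T = "\<Sum>k<n. (1 - complex_of_real ((cmod (a k))\<^sup>2)) / ((1 - cnj (a k) * w) * (w - a k))"
  have T: "w * ?T = complex_of_real (s w)"
    unfolding s_def sum_distrib_left of_real_sum
    by (intro sum.cong refl bf_circle) (use a w in auto)
  hence T': "?T = complex_of_real (s w) / w" using w0 by (simp add: field_simps)
  have D: "(B has_field_derivative \<alpha> * ((\<Prod>k<n. (w - a k) / (1 - cnj (a k) * w)) * ?T)) (at w)"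
    unfolding B_def by (rule DERIV_cmult prod_deriv a w)+
  show D': "(B has_field_derivative B w * complex_of_real (s w) / w) (at w)"
    using D unfolding T' B_def by (simp add: mult.assoc)
  have nb: "cmod ((w - a k) / (1 - cnj (a k) * w)) = 1" if "k < n" for k
  proof -
    have "(cmod (w - a k))\<^sup>2 = (cmod (1 - cnj (a k) * w))\<^sup>2"
      using bf_norm[of w "a k"] w by simp
    hence "cmod (w - a k) = cmod (1 - cnj (a k) * w)" by (simp add: power2_eq_iff_nonneg)
    moreover have "1 - cnj (a k) * w \<noteq> 0" using bf_nz[of "a k" w] a w that by simp
    ultimately show ?thesis by (simp add: norm_divide)
  qed
  show nB: "cmod (B w) = 1"
    unfolding B_def norm_mult prod_norm[symmetric] using al nb by simp
  show s0: "s w \<ge> 0" unfolding s_def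
    by (intro sum_nonneg divide_nonneg_nonneg) (use a in \<open>auto simp: power_le_one abs_square_le_1\<close>)
  have "deriv B w = B w * complex_of_real (s w) / w" by (rule DERIV_imp_deriv[OF D'])
  thus "cmod (deriv B w) = s w" using nB w s0 by (simp add: norm_mult norm_divide)
qed



lemma aux_term:
  fixes y P1 P2 lam \<alpha> Q Bv c :: complex
  assumes "-y*P1 = -lam/\<alpha>" "\<alpha> * P2 = Q*Bv*c" "y*Bv = lam" "y\<noteq>0" "Q\<noteq>0" "Bv\<noteq>0" "c\<noteq>0" "\<alpha>\<noteq>0"
  shows "Q * (P1/P2) = 1/c"
proof -
  have p1: "P1 = y*Bv/(\<alpha>*y)" using assms(1,3,4,8) by (simp add: field_simps)
  have p2: "P2 = Q*Bv*c/\<alpha>" using assms(2,8) by (simp add: field_simps)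
  show ?thesis unfolding p1 p2 using assms(4-8) by (simp add: field_simps)
qed

lemma core:
  fixes \<alpha> :: complex and a :: "nat \<Rightarrow> complex" and lam :: complex
  assumes al: "cmod \<alpha> = 1" and a: "\<forall>k<n. cmod (a k) < 1" and lam: "cmod lam = 1"
  defines "B \<equiv> \<lambda>z. \<alpha> * (\<Prod>k<n. (z - a k) / (1 - cnj (a k) * z))"
    and "s \<equiv> \<lambda>w. \<Sum>k<n. (1 - (cmod (a k))\<^sup>2) / (cmod (w - a k))\<^sup>2"
  shows "finite {y. cmod y = 1 \<and> y * B y = lam} \<and> card {y. cmod y = 1 \<and> y * B y = lam} = Suc n
     \<and> (\<Sum>y\<in>{y. cmod y = 1 \<and> y * B y = lam}. 1 / (1 + s y)) = 1"
proof -
  have al0: "\<alpha> \<noteq> 0" using al by auto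
  define Pp where "Pp = (\<Prod>k<n. [:-a k, 1:])"
  define Qp where "Qp = (\<Prod>k<n. [:1, - cnj (a k):])"
  define Rp where "Rp = smult \<alpha> (pCons 0 Pp) - smult lam Qp"
  have pP: "poly Pp w = (\<Prod>k<n. (w - a k))" for w by (simp add: Pp_def poly_prod)
  have pQ: "poly Qp w = (\<Prod>k<n. (1 - cnj (a k) * w))" for w
    by (simp add: Qp_def poly_prod algebra_simps)
  have pR: "poly Rp w = \<alpha> * w * poly Pp w - lam * poly Qp w" for w
    by (simp add: Rp_def)
  have dP: "degree Pp = n"
    unfolding Pp_def by (subst degree_prod_eq_sum_degree) auto
  have lP: "lead_coeff Pp = 1"
    unfolding Pp_def lead_coeff_prod by simp
  have dQ: "degree Qp \<le> n"
  proof -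
    have "degree Qp \<le> (\<Sum>k<n. degree [:1, - cnj (a k):])"
      unfolding Qp_def using degree_prod_sum_le[of "{..<n}" "\<lambda>k. [:1, - cnj (a k):]"] by (simp add: o_def)
    also have "\<dots> \<le> (\<Sum>k<n. 1)" by (intro sum_mono) simp
    finally show ?thesis by simp
  qed
  have cR: "coeff Rp (Suc n) = \<alpha>"
    using lP dP dQ by (simp add: Rp_def coeff_eq_0)
  have dR: "degree Rp = Suc n"
  proof (rule antisym)
    have "degree (smult \<alpha> (pCons 0 Pp)) \<le> Suc n"
      using dP by (metis degree_pCons_le degree_smult_le order_trans)
    moreover have "degree (smult lam Qp) \<le> Suc n"
      using dQ by (metis degree_smult_le le_SucI order_trans)
    ultimately show "degree Rp \<le> Suc n" unfolding Rp_def
      by (meson degree_diff_le)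
    show "Suc n \<le> degree Rp" using cR al0 by (intro le_degree) simp
  qed
  have lR: "lead_coeff Rp = \<alpha>" using cR dR by simp
  have R0: "Rp \<noteq> 0" using cR al0 by auto
  have Qnz: "poly Qp w \<noteq> 0" if "cmod w \<le> 1" for w
    unfolding pQ using bf_nz a that by auto
  have Bf: "B w = \<alpha> * poly Pp w / poly Qp w" for w
    unfolding B_def pP pQ by (simp add: prod_dividef)
  have root: "poly Rp y = 0 \<longleftrightarrow> cmod y = 1 \<and> y * B y = lam" for y
  proof
    assume r: "poly Rp y = 0"
    have Qy: "poly Qp y \<noteq> 0"
    proof
      assume q: "poly Qp y = 0"
      then have "\<alpha> * y * poly Pp y = 0" using r pR[of y] by simp
      hence yP: "y = 0 \<or> poly Pp y = 0" using al0 by simp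
      have Q0: "poly Qp 0 \<noteq> 0" by (rule Qnz) simp
      show False
      proof (cases "y = 0")
        case True thus False using q Q0 by simp
      next
        case False
        hence "poly Pp y = 0" using yP by simp
        then obtain k where "k < n" "y = a k" unfolding pP by auto
        hence "cmod y \<le> 1" using a by auto
        thus False using Qnz q by blast
      qed
    qed
    have yB: "y * B y = lam"
    proof -
      have "\<alpha> * y * poly Pp y = lam * poly Qp y" using r pR[of y] by simp
      thus ?thesis unfolding Bf using Qy by (simp add: field_simps)
    qed
    have nz: "1 - cnj (a k) * y \<noteq> 0" if "k < n" for k
      using Qy that unfolding pQ by auto
    have nB: "cmod (B y) = (\<Prod>k<n. cmod (y - a k) / cmod (1 - cnj (a k) * y))"
      unfolding B_def by (simp add: norm_mult prod_norm[symmetric] norm_divide al)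
    have one: "cmod y * cmod (B y) = 1" using yB lam by (metis norm_mult)
    have "cmod y = 1"
    proof (rule ccontr)
      assume ne: "cmod y \<noteq> 1"
      show False
      proof (cases "cmod y < 1")
        case True
        have "cmod (B y) \<le> 1" unfolding nB
          by (rule prod_le_1) (use bf_le[of _ y] a nz True in \<open>auto simp: divide_le_eq_1\<close>)
        hence "cmod y * cmod (B y) \<le> cmod y" by (simp add: mult_left_le)
        thus False using one True by simp
      next
        case False
        hence gt: "cmod y > 1" using ne by simp
        have "cmod (B y) \<ge> 1" unfolding nB
          by (rule prod_ge_1) (use bf_ge[of _ y] a nz gt in \<open>auto simp: le_divide_eq_1\<close>)
        hence "cmod y * cmod (B y) \<ge> cmod y" by (simp add: mult_le_cancel_left1)
        thus False using one gt by simp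
      qed
    qed
    thus "cmod y = 1 \<and> y * B y = lam" using yB by simp
  next
    assume h: "cmod y = 1 \<and> y * B y = lam"
    have Qy: "poly Qp y \<noteq> 0" using Qnz h by simp
    show "poly Rp y = 0" using h Qy unfolding pR Bf by (simp add: field_simps)
  qed
  have Q0: "Qp \<noteq> 0" using Qnz[of 0] by auto
  have Dr: "poly (pderiv Rp) y = poly Qp y * B y * (1 + complex_of_real (s y))"
    if y1: "cmod y = 1" and yB: "y * B y = lam" for y
  proof -
    define U where "U = - {w. poly Qp w = 0}"
    have oU: "open U" unfolding U_def using poly_roots_finite[OF Q0]
      by (simp add: finite_imp_closed open_Compl)
    have yU: "y \<in> U" using Qnz y1 unfolding U_def by simp
    have eqU: "poly Qp x * (x * B x - lam) = poly Rp x" if "x \<in> U" for x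
      using that unfolding U_def pR Bf by (simp add: field_simps)
    have dB: "(B has_field_derivative B y * complex_of_real (s y) / y) (at y)"
      unfolding B_def s_def by (rule B_facts(1)[OF al a y1])
    note dg = DERIV_mult[OF poly_DERIV[of Qp y] DERIV_diff[OF DERIV_mult[OF DERIV_ident dB] DERIV_const[of lam]]]
    note dR = has_field_derivative_transform_within_open[OF dg oU yU eqU]
    have "poly (pderiv Rp) y = poly (pderiv Qp) y * (y * B y - lam) +
       ((1 * B y + B y * complex_of_real (s y) / y * y) - 0) * poly Qp y"
      by (rule DERIV_unique[OF poly_DERIV dR])
    thus ?thesis using yB y1 by (auto simp: field_simps)
  qed
  have Bn: "cmod (B y) = 1" and sn: "s y \<ge> 0" if "cmod y = 1" for y
    unfolding B_def s_def using B_facts(2,3)[OF al a that] by auto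
  have rsq: "rsquarefree Rp"
    unfolding rsquarefree_roots
  proof (intro allI notI)
    fix y assume h: "poly Rp y = 0 \<and> poly (pderiv Rp) y = 0"
    hence y: "cmod y = 1" "y * B y = lam" using root by auto
    have "1 + complex_of_real (s y) \<noteq> 0"
    proof
      assume "1 + complex_of_real (s y) = 0"
      hence "complex_of_real (1 + s y) = 0" by simp
      hence "1 + s y = 0" by (simp only: of_real_eq_0_iff)
      thus False using sn[OF y(1)] by simp
    qed
    moreover have "poly Qp y \<noteq> 0" using Qnz y by simp
    moreover have "B y \<noteq> 0" using Bn[OF y(1)] by auto
    ultimately show False using h Dr[OF y] by simp
  qed
  define S where "S = {y. poly Rp y = 0}"
  have S_eq: "S = {y. cmod y = 1 \<and> y * B y = lam}" unfolding S_def using root by auto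
  have finS: "finite S" unfolding S_def by (rule poly_roots_finite[OF R0])
  have dec: "Rp = smult \<alpha> (\<Prod>z\<in>S. [:-z,1:])"
    using complex_poly_decompose_rsquarefree[OF rsq] lR unfolding S_def by simp
  have cardS: "card S = Suc n"
  proof -
    have "degree (\<Prod>z\<in>S. [:-z,1:]) = card S"
      by (subst degree_prod_eq_sum_degree) auto
    hence "degree Rp = card S" by (subst dec) (simp add: al0)
    thus ?thesis using dR by simp
  qed
  have Dp: "poly (pderiv Rp) y = \<alpha> * (\<Prod>z\<in>S-{y}. (y - z))" if yS: "y \<in> S" for y
  proof -
    have R': "Rp = smult \<alpha> ([:-y,1:] * (\<Prod>z\<in>S-{y}. [:-z,1:]))"
      using dec prod.remove[OF finS yS, of "\<lambda>z. [:-z,1:]"] by simp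
    have "pderiv Rp = smult \<alpha> ([:-y,1:] * pderiv (\<Prod>z\<in>S-{y}. [:-z,1:]) + (\<Prod>z\<in>S-{y}. [:-z,1:]) * pderiv [:-y,1:])"
      by (subst R') (simp only: pderiv_mult pderiv_smult)
    thus ?thesis by (simp add: pderiv_pCons poly_prod)
  qed
  have L: "poly Qp 0 = (\<Sum>y\<in>S. poly Qp y * (\<Prod>z\<in>S-{y}. (0 - z) / (y - z)))"
    by (rule lagrange[OF finS]) (use dQ cardS in simp)
  have Qz: "poly Qp 0 = 1" unfolding pQ by simp
  have prodS0: "(\<Prod>z\<in>S. (0 - z)) = - lam / \<alpha>"
  proof -
    have "poly Rp 0 = - lam" unfolding pR Qz by simp
    moreover have "poly Rp 0 = \<alpha> * (\<Prod>z\<in>S. (0 - z))"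
      by (subst dec) (simp add: poly_prod)
    ultimately show ?thesis using al0 by (simp add: field_simps)
  qed
  have tm: "poly Qp y * (\<Prod>z\<in>S-{y}. (0 - z) / (y - z)) = complex_of_real (1 / (1 + s y))"
    if yS: "y \<in> S" for y
  proof -
    have y: "cmod y = 1" "y * B y = lam" using yS S_eq by auto
    have c0: "1 + complex_of_real (s y) \<noteq> 0"
    proof
      assume "1 + complex_of_real (s y) = 0"
      hence "complex_of_real (1 + s y) = 0" by simp
      hence "1 + s y = 0" by (simp only: of_real_eq_0_iff)
      thus False using sn[OF y(1)] by simp
    qed
    have e1: "- y * (\<Prod>z\<in>S-{y}. (0 - z)) = - lam / \<alpha>"
      using prodS0 prod.remove[OF finS yS, of "\<lambda>z. 0 - z"] by simp
    have e2: "\<alpha> * (\<Prod>z\<in>S-{y}. (y - z)) = poly Qp y * B y * (1 + complex_of_real (s y))"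
      using Dp[OF yS] Dr[OF y] by simp
    have "poly Qp y * ((\<Prod>z\<in>S-{y}. (0 - z)) / (\<Prod>z\<in>S-{y}. (y - z))) = 1 / (1 + complex_of_real (s y))"
      by (rule aux_term[OF e1 e2 y(2)]) (use y Qnz Bn[OF y(1)] c0 al0 in auto)
    thus ?thesis by (simp only: prod_dividef of_real_divide of_real_1 of_real_add)
  qed
  have "complex_of_real (\<Sum>y\<in>S. 1 / (1 + s y)) = 1"
    unfolding of_real_sum using L tm Qz by simp
  hence "(\<Sum>y\<in>S. 1 / (1 + s y)) = 1" by (simp only: of_real_eq_1_iff)
  thus ?thesis using finS cardS S_eq by simp
qed



lemma ext_intro:
  fixes B :: "complex \<Rightarrow> complex"
  assumes finS: "finite S" and cS: "card S = Suc n" and w0: "w0 \<in> S" and lam: "cmod lam = 1"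
    and Sp: "\<forall>y\<in>S. cmod y = 1 \<and> y * B y = lam"
    and d0: "cmod (deriv B w0) = real n / (\<nu> + 1)"
    and dk: "\<forall>y\<in>S-{w0}. cmod (deriv B y) = real n + \<nu>"
  shows "extremal_points B n \<nu>"
proof -
  have fin: "finite (S - {w0})" using finS by simp
  have cS': "card (S - {w0}) = n" using cS w0 finS by simp
  obtain h where h: "bij_betw h {0..<n} (S - {w0})"
    using ex_bij_betw_nat_finite[OF fin] cS' by auto
  define z where "z = (\<lambda>k. if k = 0 then w0 else h (k - 1))"
  have zS: "z k \<in> S" if "k \<le> n" for k
  proof (cases "k = 0")
    case True thus ?thesis using w0 z_def by simp
  next
    case False
    hence "k - 1 \<in> {0..<n}" using that by auto
    hence "h (k - 1) \<in> S - {w0}" using h by (auto simp: bij_betw_def)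
    thus ?thesis using False z_def by simp
  qed
  have zS': "z k \<in> S - {w0}" if "k \<in> {1..n}" for k
  proof -
    have "k - 1 \<in> {0..<n}" using that by auto
    hence "h (k - 1) \<in> S - {w0}" using h by (auto simp: bij_betw_def)
    thus ?thesis using that z_def by simp
  qed
  have inj: "inj_on z {0..n}"
  proof (rule inj_onI)
    fix i j assume i: "i \<in> {0..n}" and j: "j \<in> {0..n}" and e: "z i = z j"
    show "i = j"
    proof (cases "i = 0"; cases "j = 0")
      assume "i = 0" "j = 0" thus ?thesis by simp
    next
      assume i0: "i = 0" and j0: "j \<noteq> 0"
      hence "z j \<in> S - {w0}" using zS' j by auto
      thus ?thesis using e i0 z_def by simp
    next
      assume i0: "i \<noteq> 0" and j0: "j = 0"
      hence "z i \<in> S - {w0}" using zS' i by auto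
      thus ?thesis using e j0 z_def by simp
    next
      assume i0: "i \<noteq> 0" and j0: "j \<noteq> 0"
      hence "h (i - 1) = h (j - 1)" using e z_def by simp
      moreover have "i - 1 \<in> {0..<n}" "j - 1 \<in> {0..<n}" using i j i0 j0 by auto
      ultimately have "i - 1 = j - 1" using h by (auto simp: bij_betw_def inj_on_def)
      thus ?thesis using i0 j0 by simp
    qed
  qed
  show ?thesis unfolding extremal_points_def
  proof (intro exI conjI)
    show "cmod lam = 1" by (rule lam)
    show "inj_on z {0..n}" by (rule inj)
    show "\<forall>k\<le>n. cmod (z k) = 1 \<and> z k * B (z k) = lam" using zS Sp by blast
    show "cmod (deriv B (z 0)) = real n / (\<nu> + 1)" using d0 z_def by simp
    show "\<forall>k\<in>{1..n}. cmod (deriv B (z k)) = real n + \<nu>" using zS' dk by blast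
  qed
qed


lemma arith1:
  fixes m M :: real and n :: nat
  assumes "m \<ge> 0" "M \<ge> 0" "m = real n / (M - real n + 1)" "1/(1+m) + real n/(1+M) \<le> 1"
  shows "1/(1+m) + real n/(1+M) = 1"
proof (cases "M - real n + 1 = 0")
  case True
  hence "m = 0" using assms(3) by simp
  hence "real n / (1 + M) \<le> 0" using assms(4) by simp
  hence "real n \<le> 0" using assms(2) by (simp add: divide_le_0_iff)
  hence "n = 0" by simp
  thus ?thesis using True assms(2) by simp
next
  case False
  hence e: "m * (M - real n + 1) = real n" using assms(3) by simp
  have h: "(1 + M) + real n * (1 + m) = (1 + m) * (1 + M)" using e by (simp add: algebra_simps)
  have d: "(1 + m) * (1 + M) \<noteq> 0" using assms(1,2) by simp
  have "1/(1+m) + real n/(1+M) = ((1 + M) + real n * (1 + m)) / ((1 + m) * (1 + M))"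
  proof -
    have "1 + m \<noteq> 0" "1 + M \<noteq> 0" using assms(1,2) by auto
    thus ?thesis by (simp add: field_simps)
  qed
  thus ?thesis using h d by simp
qed

lemma arith2:
  fixes m M :: real and n :: nat
  assumes "m \<ge> 0" "M > 0" "m = real n - 1 + real n / M"
  shows "1/(1+M) + real n/(1+m) = 1"
proof -
  have e: "m * M = (real n - 1) * M + real n" using assms(2,3) by (simp add: field_simps)
  have h: "(1 + m) + real n * (1 + M) = (1 + M) * (1 + m)" using e by (simp add: algebra_simps)
  have d: "(1 + M) * (1 + m) \<noteq> 0" using assms(1,2) by simp
  have "1/(1+M) + real n/(1+m) = ((1 + m) + real n * (1 + M)) / ((1 + M) * (1 + m))"
  proof -
    have "1 + m \<noteq> 0" "1 + M \<noteq> 0" using assms(1,2) by auto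
    thus ?thesis by (simp add: field_simps)
  qed
  thus ?thesis using h d by simp
qed

lemma core':
  fixes \<alpha> :: complex and a :: "nat \<Rightarrow> complex" and lam :: complex
  assumes al: "cmod \<alpha> = 1" and a: "\<forall>k<n. cmod (a k) < 1" and lam: "cmod lam = 1"
    and Beq: "B = (\<lambda>z. \<alpha> * (\<Prod>k<n. (z - a k) / (1 - cnj (a k) * z)))"
    and seq: "s = (\<lambda>w. \<Sum>k<n. (1 - (cmod (a k))\<^sup>2) / (cmod (w - a k))\<^sup>2)"
  shows "finite {y. cmod y = 1 \<and> y * B y = lam} \<and> card {y. cmod y = 1 \<and> y * B y = lam} = Suc n
     \<and> (\<Sum>y\<in>{y. cmod y = 1 \<and> y * B y = lam}. 1 / (1 + s y)) = 1"
  unfolding Beq seq by (rule core[OF al a lam])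

lemma B_facts':
  fixes \<alpha> :: complex and a :: "nat \<Rightarrow> complex" and w :: complex
  assumes al: "cmod \<alpha> = 1" and a: "\<forall>k<n. cmod (a k) < 1" and w: "cmod w = 1"
    and Beq: "B = (\<lambda>z. \<alpha> * (\<Prod>k<n. (z - a k) / (1 - cnj (a k) * z)))"
    and seq: "s = (\<lambda>w. \<Sum>k<n. (1 - (cmod (a k))\<^sup>2) / (cmod (w - a k))\<^sup>2)"
  shows "cmod (B w) = 1" and "s w \<ge> 0" and "cmod (deriv B w) = s w"
  unfolding Beq seq using B_facts(2-4)[OF al a w] by auto

theorem lemma9:
  fixes B :: "complex \<Rightarrow> complex" and n :: nat
  assumes "is_blaschke B n"
  shows "(mmin B = real n / (Mmax B - real n + 1) \<longrightarrow> extremal_points B n (Mmax B - real n))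
       \<and> (mmin B = real n - 1 + real n / Mmax B \<longrightarrow> extremal_points B n (mmin B - real n))"
proof -
  obtain \<alpha> a where al: "cmod \<alpha> = 1" and aball: "\<forall>k<n. a k \<in> ball 0 1"
    and Beq: "B = (\<lambda>z. \<alpha> * (\<Prod>k<n. (z - a k) / (1 - cnj (a k) * z)))"
    using assms unfolding is_blaschke_def by blast
  have a: "\<forall>k<n. cmod (a k) < 1" using aball by auto
  define s where "s = (\<lambda>w. \<Sum>k<n. (1 - (cmod (a k))\<^sup>2) / (cmod (w - a k))\<^sup>2)"
  note BF = B_facts'[OF al a _ Beq s_def]
  note CR = core'[OF al a _ Beq s_def]
  have cont: "continuous_on (sphere 0 1) s"
    unfolding s_def by (intro continuous_intros) (use a in \<open>auto simp: dist_norm\<close>)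
  have cs: "compact (sphere (0::complex) 1)" by simp
  have ne: "sphere (0::complex) 1 \<noteq> {}" by (metis norm_one mem_sphere_0 empty_iff)
  obtain w0 where w0s: "w0 \<in> sphere 0 1" and w0m: "\<forall>y\<in>sphere 0 1. s w0 \<le> s y"
    using continuous_attains_inf[OF cs ne cont] by blast
  obtain w1 where w1s: "w1 \<in> sphere 0 1" and w1m: "\<forall>y\<in>sphere 0 1. s y \<le> s w1"
    using continuous_attains_sup[OF cs ne cont] by blast
  have w0n: "cmod w0 = 1" and w1n: "cmod w1 = 1" using w0s w1s by auto
  have img: "(\<lambda>z. cmod (deriv B z)) ` sphere 0 1 = s ` sphere 0 1"
    by (rule image_cong) (auto simp: BF(3))
  have mm: "mmin B = s w0"
    unfolding mmin_def img using w0s w0m by (intro cInf_eq_minimum) auto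
  have MM: "Mmax B = s w1"
    unfolding Mmax_def img using w1s w1m by (intro cSup_eq_maximum) auto
  have sge: "s y \<ge> 0" if "cmod y = 1" for y using BF(2)[OF that] .
  have sle: "s w0 \<le> s y" "s y \<le> s w1" if "cmod y = 1" for y using w0m w1m that by auto
  show ?thesis
  proof (intro conjI impI)
    assume hyp: "mmin B = real n / (Mmax B - real n + 1)"
    define lam where "lam = w0 * B w0"
    have lam: "cmod lam = 1" unfolding lam_def using BF(1)[OF w0n] w0n by (simp add: norm_mult)
    define S where "S = {y. cmod y = 1 \<and> y * B y = lam}"
    have finS: "finite S" and cS: "card S = Suc n" and sumS: "(\<Sum>y\<in>S. 1 / (1 + s y)) = 1"
      using CR[OF lam] unfolding S_def by auto
    have w0S: "w0 \<in> S" unfolding S_def lam_def using w0n by simp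
    have cS': "card (S - {w0}) = n" using cS w0S finS by simp
    have sum1: "1 / (1 + s w0) + (\<Sum>y\<in>S-{w0}. 1 / (1 + s y)) = 1"
      using sumS sum.remove[OF finS w0S, of "\<lambda>y. 1 / (1 + s y)"] by simp
    have ge: "1 / (1 + s y) \<ge> 1 / (1 + s w1)" if "y \<in> S" for y
    proof -
      have "cmod y = 1" using that S_def by simp
      thus ?thesis using sle sge w1n by (intro divide_left_mono mult_pos_pos) (auto simp: add_pos_nonneg)
    qed
    have "(\<Sum>y\<in>S-{w0}. 1 / (1 + s w1)) \<le> (\<Sum>y\<in>S-{w0}. 1 / (1 + s y))"
      by (rule sum_mono) (use ge in auto)
    hence le: "real n / (1 + s w1) \<le> (\<Sum>y\<in>S-{w0}. 1 / (1 + s y))" using cS' by simp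
    have eq: "1/(1 + s w0) + real n/(1 + s w1) = 1"
      by (rule arith1) (use hyp mm MM sge[OF w0n] sge[OF w1n] sum1 le in auto)
    have "(\<Sum>y\<in>S-{w0}. 1 / (1 + s y) - 1 / (1 + s w1)) = 0"
      using sum1 eq cS' by (simp add: sum_subtractf)
    hence z: "\<forall>y\<in>S-{w0}. 1 / (1 + s y) - 1 / (1 + s w1) = 0"
      using finS ge by (subst (asm) sum_nonneg_eq_0_iff) auto
    have sM: "s y = s w1" if "y \<in> S - {w0}" for y
    proof -
      have "cmod y = 1" using that S_def by simp
      hence "1 + s y > 0" "1 + s w1 > 0" using sge w1n by (auto simp: add_pos_nonneg)
      moreover have "1 / (1 + s y) = 1 / (1 + s w1)" using z that by simp
      ultimately show ?thesis by (simp add: field_simps)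
    qed
    show "extremal_points B n (Mmax B - real n)"
    proof (rule ext_intro[OF finS cS w0S lam])
      show "\<forall>y\<in>S. cmod y = 1 \<and> y * B y = lam" unfolding S_def by simp
      show "cmod (deriv B w0) = real n / (Mmax B - real n + 1)"
        using hyp mm BF(3)[OF w0n] by simp
      show "\<forall>y\<in>S-{w0}. cmod (deriv B y) = real n + (Mmax B - real n)"
        using sM BF(3) MM S_def by auto
    qed
  next
    assume hyp: "mmin B = real n - 1 + real n / Mmax B"
    define lam where "lam = w1 * B w1"
    have lam: "cmod lam = 1" unfolding lam_def using BF(1)[OF w1n] w1n by (simp add: norm_mult)
    define S where "S = {y. cmod y = 1 \<and> y * B y = lam}"
    have finS: "finite S" and cS: "card S = Suc n" and sumS: "(\<Sum>y\<in>S. 1 / (1 + s y)) = 1"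
      using CR[OF lam] unfolding S_def by auto
    have w1S: "w1 \<in> S" unfolding S_def lam_def using w1n by simp
    have cS': "card (S - {w1}) = n" using cS w1S finS by simp
    have sum1: "1 / (1 + s w1) + (\<Sum>y\<in>S-{w1}. 1 / (1 + s y)) = 1"
      using sumS sum.remove[OF finS w1S, of "\<lambda>y. 1 / (1 + s y)"] by simp
    have le1: "1 / (1 + s y) \<le> 1 / (1 + s w0)" if "y \<in> S" for y
    proof -
      have "cmod y = 1" using that S_def by simp
      thus ?thesis using sle sge w0n by (intro divide_left_mono mult_pos_pos) (auto simp: add_pos_nonneg)
    qed
    have Mpos: "s w1 > 0"
    proof (rule ccontr)
      assume "\<not> s w1 > 0"
      hence M0: "s w1 = 0" using sge[OF w1n] by simp
      have "\<forall>y\<in>S. s y = 0"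
      proof
        fix y assume "y \<in> S"
        hence "cmod y = 1" using S_def by simp
        thus "s y = 0" using sge sle M0 by (metis order_antisym)
      qed
      hence "(\<Sum>y\<in>S. 1 / (1 + s y)) = real (card S)" by simp
      hence "n = 0" using sumS cS by simp
      moreover have "s w0 = 0" using sge[OF w0n] sle(2)[OF w0n] M0 by simp
      ultimately show False using hyp mm by simp
    qed
    have "(\<Sum>y\<in>S-{w1}. 1 / (1 + s y)) \<le> (\<Sum>y\<in>S-{w1}. 1 / (1 + s w0))"
      by (rule sum_mono) (use le1 in auto)
    hence le: "(\<Sum>y\<in>S-{w1}. 1 / (1 + s y)) \<le> real n / (1 + s w0)" using cS' by simp
    have eq: "1/(1 + s w1) + real n/(1 + s w0) = 1"
      by (rule arith2) (use hyp mm MM sge[OF w0n] Mpos in auto)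
    have "(\<Sum>y\<in>S-{w1}. 1 / (1 + s w0) - 1 / (1 + s y)) = 0"
      using sum1 eq cS' by (simp add: sum_subtractf)
    hence z: "\<forall>y\<in>S-{w1}. 1 / (1 + s w0) - 1 / (1 + s y) = 0"
      using finS le1 by (subst (asm) sum_nonneg_eq_0_iff) auto
    have sm: "s y = s w0" if "y \<in> S - {w1}" for y
    proof -
      have "cmod y = 1" using that S_def by simp
      hence "1 + s y > 0" "1 + s w0 > 0" using sge w0n by (auto simp: add_pos_nonneg)
      moreover have "1 / (1 + s y) = 1 / (1 + s w0)" using z that by simp
      ultimately show ?thesis by (simp add: field_simps)
    qed
    have n0: "n \<noteq> 0"
    proof
      assume "n = 0"
      hence "mmin B = -1" using hyp by simp
      thus False using mm sge[OF w0n] by simp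
    qed
    show "extremal_points B n (mmin B - real n)"
    proof (rule ext_intro[OF finS cS w1S lam])
      show "\<forall>y\<in>S. cmod y = 1 \<and> y * B y = lam" unfolding S_def by simp
      have "mmin B - real n + 1 = real n / Mmax B" using hyp by simp
      thus "cmod (deriv B w1) = real n / (mmin B - real n + 1)"
        using BF(3)[OF w1n] MM Mpos n0 by simp
      show "\<forall>y\<in>S-{w1}. cmod (deriv B y) = real n + (mmin B - real n)"
        using sm BF(3) mm S_def by auto
    qed
  qed
qed

end
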